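(* Let $n,x$ be integers with $1<x<n$, so that $G=C_{2n}(x,1,n)$ is a $5$-regular circulant graph. If $n\equiv x\equiv 0\pmod 3$ and $\tfrac{n}{2}\leq x\leq n$, then $G$ is word-representable.
   Context: Two distinct letters $x,y$ alternate in a word $w$ if, after deleting all other letters from $w$, the resulting word is of the form $xyxy\cdots$ or $yxyx\cdots$ (of even or odd length). A graph $G=(V,E)$ is word-representable if there is a word $w$ over the alphabet $V$, containing every letter of $V$ at least once, such that for all distinct $x,y\in V$, $xy\in E$ if and only if $x$ and $y$ alternate in $w$. For an integer $m$ and a set $R$ of positive integers each at most $m/2$, the circulant graph $C_m(R)$ has vertex set $\{0,1,\dots,m-1\}$, with $i$ and $j$ adjacent iff $\min(|i-j|,\,m-|i-j|)\in R$. $C_{2n}(x,1,n)$ denotes the circulant graph on $2n$ vertices with jump set $\{1,x,n\}$; it is $5$-regular exactly when $1<x<n$. *)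

theory Defs
  imports Main
begin

definition alternate :: "'a list \<Rightarrow> 'a \<Rightarrow> 'a \<Rightarrow> bool" where
  "alternate w x y \<longleftrightarrow>
     (let u = filter (\<lambda>z. z = x \<or> z = y) w in
      \<forall>i. Suc i < length u \<longrightarrow> u ! i \<noteq> u ! Suc i)"

definition word_representable :: "'a set \<Rightarrow> ('a \<Rightarrow> 'a \<Rightarrow> bool) \<Rightarrow> bool" where
  "word_representable V E \<longleftrightarrow>
     (\<exists>w. set w = V \<and>
          (\<forall>x\<in>V. \<forall>y\<in>V. x \<noteq> y \<longrightarrow> (E x y \<longleftrightarrow> alternate w x y)))"

definition circ_vertices :: "nat \<Rightarrow> nat set" where
  "circ_vertices m = {0..<m}"

definition circ_adj :: "nat \<Rightarrow> nat set \<Rightarrow> nat \<Rightarrow> nat \<Rightarrow> bool" where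
  "circ_adj m R i j \<longleftrightarrow>
     (let d = (if i \<le> j then j - i else i - j) in min d (m - d) \<in> R)"

end

theory Submission
  imports Defs
begin

fun xyrep :: "'a \<Rightarrow> 'a \<Rightarrow> 'a list \<Rightarrow> bool" where
  "xyrep x y [] = True"
| "xyrep x y [a] = False"
| "xyrep x y (a # b # l) = (a = x \<and> b = y \<and> xyrep x y l)"

lemma xyrep_append: "xyrep x y l1 \<Longrightarrow> xyrep x y l2 \<Longrightarrow> xyrep x y (l1 @ l2)"
  by (induction x y l1 rule: xyrep.induct) auto

lemma xyrep_concat: "\<forall>l\<in>set ls. xyrep x y l \<Longrightarrow> xyrep x y (concat ls)"
  by (induction ls) (auto simp: xyrep_append)

lemma xyrep_hd: "xyrep x y l \<Longrightarrow> l \<noteq> [] \<Longrightarrow> l ! 0 = x"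
  by (cases "(x,y,l)" rule: xyrep.cases) auto

lemma xyrep_alt: "xyrep x y l \<Longrightarrow> x \<noteq> y \<Longrightarrow> Suc i < length l \<Longrightarrow> l ! i \<noteq> l ! Suc i"
proof (induction x y l arbitrary: i rule: xyrep.induct)
  case (3 x y a b l)
  show ?case
  proof (cases i)
    case 0 then show ?thesis using 3 by auto
  next
    case (Suc j)
    show ?thesis
    proof (cases j)
      case 0
      then have "l \<noteq> []" using 3 Suc by auto
      then show ?thesis using 3 Suc 0 xyrep_hd[of x y l] by auto
    next
      case (Suc k)
      then show ?thesis using 3 \<open>i = Suc j\<close> by auto
    qed
  qed
qed auto

lemma infix_not_alt:
  assumes "xs = p @ [z, z] @ q"
  shows "\<exists>i. Suc i < length xs \<and> xs ! i = xs ! Suc i"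
  using assms by (intro exI[of _ "length p"]) (auto simp: nth_append)

lemma alternate_iff:
  "alternate w x y \<longleftrightarrow> (\<forall>i. Suc i < length (filter (\<lambda>z. z = x \<or> z = y) w) \<longrightarrow>
     filter (\<lambda>z. z = x \<or> z = y) w ! i \<noteq> filter (\<lambda>z. z = x \<or> z = y) w ! Suc i)"
  by (simp add: alternate_def Let_def)

lemma alternate_sym: "alternate w x y = alternate w y x"
proof -
  have "(\<lambda>z. z = x \<or> z = y) = (\<lambda>z. z = y \<or> z = x)" by auto
  then show ?thesis by (simp add: alternate_iff)
qed

lemma filter_single: "distinct l \<Longrightarrow> x \<in> set l \<Longrightarrow> filter (\<lambda>z. z = x) l = [x]"
  by (induction l) (auto simp: filter_empty_conv)

definition tok :: "('a \<Rightarrow> bool) \<Rightarrow> 'a \<Rightarrow> 'a \<Rightarrow> 'a list" where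
  "tok P x y = (if P x then [x] else []) @ (if P y then [y] else [])"

lemma filter_pair:
  assumes "distinct L" "L = l1 @ l2" "x \<in> set l1" "y \<in> set l2"
  shows "filter (\<lambda>z. z = x \<or> z = y) (filter P L) = tok P x y"
proof -
  have d1: "distinct l1" and d2: "distinct l2" and dj: "set l1 \<inter> set l2 = {}"
    using assms by auto
  have xn: "x \<notin> set l2" and yn: "y \<notin> set l1" using assms dj by auto
  have "filter (\<lambda>z. (z = x \<or> z = y) \<and> P z) l1 = filter (\<lambda>z. z = x \<and> P x) l1"
    by (rule filter_cong) (use yn in auto)
  also have "\<dots> = (if P x then [x] else [])"
    using filter_single[OF d1 assms(3)] by auto
  finally have h1: "filter (\<lambda>z. (z = x \<or> z = y) \<and> P z) l1 = (if P x then [x] else [])" .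
  have "filter (\<lambda>z. (z = x \<or> z = y) \<and> P z) l2 = filter (\<lambda>z. z = y \<and> P y) l2"
    by (rule filter_cong) (use xn in auto)
  also have "\<dots> = (if P y then [y] else [])"
    using filter_single[OF d2 assms(4)] by auto
  finally have h2: "filter (\<lambda>z. (z = x \<or> z = y) \<and> P z) l2 = (if P y then [y] else [])" .
  show ?thesis using h1 h2 assms(2) by (simp add: filter_filter tok_def conj_commute)
qed

locale lay =
  fixes V :: "'a set" and E :: "'a \<Rightarrow> 'a \<Rightarrow> bool" and col :: "'a \<Rightarrow> nat" and L :: "'a list"
  assumes dist: "distinct L" and setL: "set L = V"
  and esym: "\<And>u v. E u v \<Longrightarrow> E v u"
  and prp: "\<And>u v. u \<in> V \<Longrightarrow> v \<in> V \<Longrightarrow> E u v \<Longrightarrow> col u \<noteq> col v"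
  and rng: "\<And>u. u \<in> V \<Longrightarrow> col u < 4"
  and rc: "\<And>a b c d. a \<in> V \<Longrightarrow> b \<in> V \<Longrightarrow> c \<in> V \<Longrightarrow> d \<in> V \<Longrightarrow>
      col a = 0 \<Longrightarrow> col b = 1 \<Longrightarrow> col c = 2 \<Longrightarrow> col d = 3 \<Longrightarrow>
      E a b \<Longrightarrow> E b c \<Longrightarrow> E c d \<Longrightarrow> E a d \<Longrightarrow> E a c \<and> E b d"
  and ord: "\<And>u v. u \<in> V \<Longrightarrow> v \<in> V \<Longrightarrow> col u < col v \<Longrightarrow>
      \<exists>l1 l2. L = l1 @ l2 \<and> u \<in> set l1 \<and> v \<in> set l2"
begin

definition D where "D u v \<longleftrightarrow> u \<in> V \<and> v \<in> V \<and> E u v \<and> col u < col v"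

lemma R_col: "D\<^sup>+\<^sup>+ u v \<Longrightarrow> col u < col v"
  by (induction rule: tranclp.induct) (auto simp: D_def)

lemma R_V: "D\<^sup>+\<^sup>+ u v \<Longrightarrow> u \<in> V \<and> v \<in> V"
  by (induction rule: tranclp.induct) (auto simp: D_def)

lemma R_rng: "D\<^sup>+\<^sup>+ u v \<Longrightarrow> col v < 4"
  using R_V rng by blast

lemma R_split: "D\<^sup>+\<^sup>+ u v \<Longrightarrow> D u v \<or> (\<exists>z. D u z \<and> D\<^sup>+\<^sup>+ z v)"
  by (induction rule: converse_tranclp_induct) auto

lemma R_split2: "D\<^sup>+\<^sup>+ u v \<Longrightarrow> D u v \<or> (\<exists>z. D\<^sup>+\<^sup>+ u z \<and> D z v)"
  by (induction rule: tranclp_induct) auto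

definition blk :: "('a \<Rightarrow> bool) \<Rightarrow> 'a list" where "blk P = filter P L"

definition G :: "'a \<Rightarrow> 'a list" where
  "G v0 = blk (\<lambda>z. z \<noteq> v0 \<and> \<not> D\<^sup>+\<^sup>+ v0 z) @ blk (\<lambda>z. z = v0 \<or> D v0 z) @ blk (\<lambda>z. D\<^sup>+\<^sup>+ z v0)
     @ blk (\<lambda>z. z = v0) @ blk (\<lambda>z. D\<^sup>+\<^sup>+ v0 z \<and> \<not> D v0 z) @ blk (\<lambda>z. z \<noteq> v0 \<and> \<not> D\<^sup>+\<^sup>+ z v0)"

lemma no_i:
  assumes "D\<^sup>+\<^sup>+ x v0" "D\<^sup>+\<^sup>+ v0 y" "\<not> D v0 y" "D x y"
  shows False
proof -
  from R_split[OF assms(2)] assms(3) obtain z where z: "D v0 z" "D\<^sup>+\<^sup>+ z y" by auto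
  have cz: "col v0 < col z" using z(1) by (simp add: D_def)
  have cy: "col z < col y" using R_col[OF z(2)] .
  have y4: "col y < 4" using R_rng[OF z(2)] .
  have cx: "col x < col v0" using R_col[OF assms(1)] .
  have xv: "D x v0"
  proof -
    { fix p assume "D\<^sup>+\<^sup>+ x p" "D p v0"
      then have "col x < col p" "col p < col v0" by (auto simp: D_def dest: R_col)
      then have False using cx cz cy y4 by linarith }
    then show ?thesis using R_split2[OF assms(1)] by blast
  qed
  have zy: "D z y"
  proof -
    { fix p assume "D z p" "D\<^sup>+\<^sup>+ p y"
      then have "col z < col p" "col p < col y" by (auto simp: D_def dest: R_col)
      then have False using cx cz cy y4 by linarith }
    then show ?thesis using R_split[OF z(2)] by blast
  qed
  have c: "col x = 0" "col v0 = 1" "col z = 2" "col y = 3" using cx cz cy y4 by linarith+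
  have "E v0 y"
    using rc[of x v0 z y] xv zy z(1) assms(4) c by (auto simp: D_def)
  then have "D v0 y" using c z(1) zy by (auto simp: D_def)
  then show False using assms(3) by simp
qed

lemma no_ii:
  assumes "D\<^sup>+\<^sup>+ v0 x" "\<not> D v0 x" "D v0 y" "D x y"
  shows False
proof -
  from R_split[OF assms(1)] assms(2) obtain z where z: "D v0 z" "D\<^sup>+\<^sup>+ z x" by auto
  have cz: "col v0 < col z" using z(1) by (simp add: D_def)
  have cx: "col z < col x" using R_col[OF z(2)] .
  have cy: "col x < col y" "col y < 4" using assms(4) rng by (auto simp: D_def)
  have zx: "D z x"
  proof -
    { fix p assume "D z p" "D\<^sup>+\<^sup>+ p x"
      then have "col z < col p" "col p < col x" by (auto simp: D_def dest: R_col)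
      then have False using cx cz cy by linarith }
    then show ?thesis using R_split[OF z(2)] by blast
  qed
  have c: "col v0 = 0" "col z = 1" "col x = 2" "col y = 3" using cx cz cy by linarith+
  have "E v0 x"
    using rc[of v0 z x y] zx z(1) assms(3,4) c by (auto simp: D_def)
  then have "D v0 x" using c z(1) zx by (auto simp: D_def)
  then show False using assms(2) by simp
qed

lemma G_edge:
  assumes "D x y"
  shows "xyrep x y (filter (\<lambda>z. z = x \<or> z = y) (G v0))"
proof -
  have xV: "x \<in> V" "y \<in> V" and cxy: "col x < col y" using assms by (auto simp: D_def)
  obtain l1 l2 where l: "L = l1 @ l2" "x \<in> set l1" "y \<in> set l2" using ord[OF xV cxy] by blast
  note fp = filter_pair[OF dist l, unfolded blk_def[symmetric]]
  have xy: "x \<noteq> y" using cxy by auto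
  have acyc: "\<And>u. \<not> (D\<^sup>+\<^sup>+ u v0 \<and> D\<^sup>+\<^sup>+ v0 u)"
    using R_col less_asym by blast
  have nv: "\<not> D\<^sup>+\<^sup>+ v0 v0" using R_col by blast
  have o1: "D v0 x \<Longrightarrow> D\<^sup>+\<^sup>+ v0 x" "D v0 y \<Longrightarrow> D\<^sup>+\<^sup>+ v0 y" by auto
  have f1: "y = v0 \<Longrightarrow> D\<^sup>+\<^sup>+ x v0" using assms by auto
  have f2: "D\<^sup>+\<^sup>+ y v0 \<Longrightarrow> D\<^sup>+\<^sup>+ x v0" using assms by auto
  have f3: "D\<^sup>+\<^sup>+ v0 x \<Longrightarrow> D\<^sup>+\<^sup>+ v0 y" using assms by auto
  have f4: "x = v0 \<Longrightarrow> D v0 y" using assms by auto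
  have f5: "\<not> (D\<^sup>+\<^sup>+ x v0 \<and> D\<^sup>+\<^sup>+ v0 y \<and> \<not> D v0 y)" using no_i assms by blast
  have f6: "\<not> (D\<^sup>+\<^sup>+ v0 x \<and> \<not> D v0 x \<and> D v0 y)" using no_ii assms by blast
  show ?thesis
    unfolding G_def filter_append fp tok_def
    using xy acyc[of x] acyc[of y] nv o1 f1 f2 f3 f4 f5 f6
    by (cases "x = v0"; cases "y = v0"; cases "D\<^sup>+\<^sup>+ x v0"; cases "D\<^sup>+\<^sup>+ v0 x"; cases "D v0 x";
        cases "D\<^sup>+\<^sup>+ y v0"; cases "D\<^sup>+\<^sup>+ v0 y"; cases "D v0 y"; simp)
qed

lemma blk_single:
  assumes "v0 \<in> V" "u \<noteq> v0" "\<not> P u" "P v0"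
  shows "filter (\<lambda>z. z = v0 \<or> z = u) (blk P) = [v0]"
proof -
  have "filter (\<lambda>z. z = v0 \<or> z = u) (blk P) = filter (\<lambda>z. z = v0) L"
    unfolding blk_def filter_filter by (rule filter_cong) (use assms in auto)
  also have "\<dots> = [v0]" using filter_single[OF dist] assms setL by auto
  finally show ?thesis .
qed

lemma blk_none:
  assumes "\<not> P u" "\<not> P v0"
  shows "filter (\<lambda>z. z = v0 \<or> z = u) (blk P) = []"
  unfolding blk_def filter_filter using assms by (auto simp: filter_empty_conv)

lemma G_nonedge:
  assumes "v0 \<in> V" "u \<noteq> v0" "\<not> D v0 u" "\<not> D\<^sup>+\<^sup>+ u v0"
  shows "\<exists>p q. filter (\<lambda>z. z = v0 \<or> z = u) (G v0) = p @ [v0, v0] @ q"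
proof -
  have nv: "\<not> D\<^sup>+\<^sup>+ v0 v0" using R_col by blast
  have a: "filter (\<lambda>z. z = v0 \<or> z = u) (blk (\<lambda>z. z = v0 \<or> D v0 z)) = [v0]"
    by (rule blk_single) (use assms in auto)
  have b: "filter (\<lambda>z. z = v0 \<or> z = u) (blk (\<lambda>z. D\<^sup>+\<^sup>+ z v0)) = []"
    by (rule blk_none) (use assms nv in auto)
  have c: "filter (\<lambda>z. z = v0 \<or> z = u) (blk (\<lambda>z. z = v0)) = [v0]"
    by (rule blk_single) (use assms in auto)
  show ?thesis unfolding G_def filter_append a b c by auto
qed

lemma set_G: "set (G v) \<subseteq> V"
  unfolding G_def blk_def using setL by auto

theorem wr: "word_representable V E"
proof -
  define w where "w = L @ concat (map G L)"
  have setw: "set w = V" using set_G setL by (auto simp: w_def)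
  have F: "filter F w = filter F L @ concat (map (\<lambda>v. filter F (G v)) L)" for F
    by (simp add: w_def filter_concat comp_def)
  have edge: "alternate w x y" if h: "D x y" for x y
  proof -
    have xy: "x \<noteq> y" using that by (auto simp: D_def)
    have xV: "x \<in> V" "y \<in> V" and cxy: "col x < col y" using that by (auto simp: D_def)
    obtain l1 l2 where l: "L = l1 @ l2" "x \<in> set l1" "y \<in> set l2" using ord[OF xV cxy] by blast
    have "filter (\<lambda>z. z = x \<or> z = y) L = tok (\<lambda>_. True) x y"
      using filter_pair[OF dist l, of "\<lambda>_. True"] by simp
    then have r0: "xyrep x y (filter (\<lambda>z. z = x \<or> z = y) L)" by (simp add: tok_def)
    have r1: "xyrep x y (concat (map (\<lambda>v. filter (\<lambda>z. z = x \<or> z = y) (G v)) L))"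
      by (rule xyrep_concat) (auto intro: G_edge[OF h])
    have "xyrep x y (filter (\<lambda>z. z = x \<or> z = y) w)"
      unfolding F using r0 r1 by (rule xyrep_append)
    then show ?thesis unfolding alternate_iff using xyrep_alt[OF _ xy] by blast
  qed
  have nonedge: "\<not> alternate w v0 u" if h: "v0 \<in> V" "u \<noteq> v0" "\<not> D v0 u" "\<not> D\<^sup>+\<^sup>+ u v0" for v0 u
  proof -
    obtain p q where pq: "filter (\<lambda>z. z = v0 \<or> z = u) (G v0) = p @ [v0, v0] @ q"
      using G_nonedge[OF h] by blast
    obtain a b where ab: "L = a @ v0 # b" using split_list[of v0 L] h(1) setL by auto
    have "filter (\<lambda>z. z = v0 \<or> z = u) w =
      (filter (\<lambda>z. z = v0 \<or> z = u) L @ concat (map (\<lambda>v. filter (\<lambda>z. z = v0 \<or> z = u) (G v)) a) @ p)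
       @ [v0, v0] @ (q @ concat (map (\<lambda>v. filter (\<lambda>z. z = v0 \<or> z = u) (G v)) b))"
      unfolding F using pq by (subst (2) ab) simp
    from infix_not_alt[OF this] obtain i where
      "Suc i < length (filter (\<lambda>z. z = v0 \<or> z = u) w)"
      "filter (\<lambda>z. z = v0 \<or> z = u) w ! i = filter (\<lambda>z. z = v0 \<or> z = u) w ! Suc i" by blast
    then show ?thesis unfolding alternate_iff by auto
  qed
  show ?thesis
    unfolding word_representable_def
  proof (intro exI[of _ w] conjI ballI impI setw)
    fix x y assume xV: "x \<in> V" and yV: "y \<in> V" and xy: "x \<noteq> y"
    show "E x y = alternate w x y"
    proof
      assume e: "E x y"
      have "col x \<noteq> col y" using prp xV yV e by blast
      then consider "col x < col y" | "col y < col x" by linarith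
      then show "alternate w x y"
      proof cases
        case 1 then show ?thesis using edge[of x y] e xV yV by (simp add: D_def)
      next
        case 2 then show ?thesis using edge[of y x] esym[OF e] xV yV alternate_sym[of w x y] by (simp add: D_def)
      qed
    next
      assume alt: "alternate w x y"
      show "E x y"
      proof (rule ccontr)
        assume ne: "\<not> E x y"
        show False
        proof (cases "D\<^sup>+\<^sup>+ x y")
          case True
          have "\<not> D x y" using ne by (simp add: D_def)
          moreover have "\<not> D\<^sup>+\<^sup>+ y x" using True R_col less_asym by blast
          ultimately have "\<not> alternate w x y" using nonedge[of x y] xV xy by auto
          then show False using alt by simp
        next
          case False
          have "\<not> D y x" using ne esym by (auto simp: D_def)
          then have "\<not> alternate w y x" using nonedge[of y x] yV xy False by auto
          then show False using alt alternate_sym[of w x y] by simp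
        qed
      qed
    qed
  qed
qed

end


definition PrB :: "nat \<Rightarrow> nat" where "PrB r = (if odd r then 2 else if r = 0 then 0 else 1)"

definition cB :: "nat \<Rightarrow> nat \<Rightarrow> nat" where "cB q r = (r mod 2 + 4 - q) mod 4"

definition REL :: "nat \<Rightarrow> nat \<Rightarrow> nat \<Rightarrow> nat \<Rightarrow> nat \<Rightarrow> bool" where
  "REL q r q' r' x \<longleftrightarrow> (q' = q \<and> r' = r + 1) \<or> (q' = q + 1 \<and> r + 1 = x \<and> r' = 0)
    \<or> (q = q' \<and> r = r' + 1) \<or> (q = q' + 1 \<and> r' + 1 = x \<and> r = 0)
    \<or> (r' = r \<and> (q' = q+1 \<or> q = q'+1 \<or> q' = q+2 \<or> q = q'+2 \<or> q' = q+3 \<or> q = q'+3))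
    \<or> (q = 0 \<and> r = 0 \<and> q' = 3 \<and> r' + 1 = x) \<or> (q' = 0 \<and> r' = 0 \<and> q = 3 \<and> r + 1 = x)"

lemma q4: "q < (4::nat) \<Longrightarrow> q = 0 \<or> q = 1 \<or> q = 2 \<or> q = 3" by auto
lemma p2: "(r::nat) mod 2 = 0 \<or> r mod 2 = 1" by auto

lemma core_prop:
  assumes "q < 4" "q' < 4" "r < x" "r' < x" "3 \<le> x" "REL q r q' r' x"
  shows "cB q' r' \<noteq> cB q r"
  using q4[OF assms(1)] q4[OF assms(2)] p2[of r] p2[of r'] assms(3-6) unfolding REL_def cB_def
  apply (elim disjE)
  apply (simp_all)
  apply presburger+
  done

lemma core_step:
  assumes "q < 4" "q' < 4" "r < x" "r' < x" "3 \<le> x" "REL q r q' r' x"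
    "cB q' r' = (cB q r + 1) mod 4"
  shows "PrB r \<le> PrB r' \<and> (PrB r' = PrB r \<longrightarrow> r' = r \<and> q' = (q + 3) mod 4)"
  using q4[OF assms(1)] q4[OF assms(2)] p2[of r] p2[of r'] assms(3-7) unfolding REL_def cB_def PrB_def
  apply (elim disjE)
  apply (simp_all add: odd_iff_mod_2_eq_one)
  done

lemma qr_eq:
  fixes a b c d x :: nat
  assumes "a*x + b = c*x + d" "b < x" "d < x"
  shows "a = c \<and> b = d"
proof -
  have "(a*x + b) div x = a" "(a*x+b) mod x = b" using assms(2) by simp_all
  moreover have "(c*x + d) div x = c" "(c*x+d) mod x = d" using assms(3) by simp_all
  ultimately show ?thesis using assms(1) by metis
qed

lemma adj_cases:
  fixes u v x :: nat
  assumes "u < 4*x" "v < 4*x" "circ_adj (4*x) {1, x, 2*x} u v"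
  shows "v = u + 1 \<or> u = v + 1 \<or> v = u + x \<or> u = v + x \<or> v = u + 2*x \<or> u = v + 2*x
    \<or> v = u + 3*x \<or> u = v + 3*x \<or> (u = 0 \<and> v + 1 = 4*x) \<or> (v = 0 \<and> u + 1 = 4*x)"
proof (cases "u \<le> v")
  case True
  define dd where "dd = v - u"
  have m: "min dd (4*x - dd) \<in> {1, x, 2*x}" using assms(3) True unfolding circ_adj_def Let_def dd_def by simp
  show ?thesis
  proof (cases "dd \<le> 4*x - dd")
    case True
    then have "dd \<in> {1, x, 2*x}" using m by (simp add: min_def)
    then show ?thesis using \<open>u \<le> v\<close> dd_def by auto
  next
    case False
    then have "4*x - dd \<in> {1, x, 2*x}" using m by (simp add: min_def)
    then consider "4*x - dd = 1" | "4*x - dd = x" | "4*x - dd = 2*x" by auto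
    then show ?thesis
    proof cases
      case 1
      have "u = 0" "v + 1 = 4*x" using 1 \<open>u \<le> v\<close> dd_def assms(2) by linarith+
      then show ?thesis by simp
    next
      case 2
      have "v = u + 3*x" using 2 \<open>u \<le> v\<close> dd_def assms(2) by linarith
      then show ?thesis by simp
    next
      case 3
      have "v = u + 2*x" using 3 \<open>u \<le> v\<close> dd_def assms(2) by linarith
      then show ?thesis by simp
    qed
  qed
next
  case False
  define dd where "dd = u - v"
  have m: "min dd (4*x - dd) \<in> {1, x, 2*x}" using assms(3) False unfolding circ_adj_def Let_def dd_def by simp
  show ?thesis
  proof (cases "dd \<le> 4*x - dd")
    case True
    then have "dd \<in> {1, x, 2*x}" using m by (simp add: min_def)
    then show ?thesis using False dd_def by auto
  next
    case c: False
    then have "4*x - dd \<in> {1, x, 2*x}" using m by (simp add: min_def)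
    then consider "4*x - dd = 1" | "4*x - dd = x" | "4*x - dd = 2*x" by auto
    then show ?thesis
    proof cases
      case 1
      have "v = 0" "u + 1 = 4*x" using 1 False dd_def assms(1) by linarith+
      then show ?thesis by simp
    next
      case 2
      have "u = v + 3*x" using 2 False dd_def assms(1) by linarith
      then show ?thesis by simp
    next
      case 3
      have "u = v + 2*x" using 3 False dd_def assms(1) by linarith
      then show ?thesis by simp
    qed
  qed
qed

lemma relB:
  fixes x q r q' r' u v :: nat
  assumes x3: "3 \<le> x" and u: "u = q*x + r" and v: "v = q'*x + r'" and r: "r < x" "r' < x"
    and ul: "u < 4*x" and vl: "v < 4*x" and adj: "circ_adj (4*x) {1, x, 2*x} u v"
  shows "REL q r q' r' x"
proof -
  from adj_cases[OF ul vl adj] consider (a) "v = u+1" | (b) "u = v+1" | (c) "v = u + x" | (d) "u = v + x"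
    | (e) "v = u + 2*x" | (f) "u = v + 2*x" | (g) "v = u + 3*x" | (h) "u = v+3*x"
    | (i) "u = 0 \<and> v + 1 = 4*x" | (j) "v = 0 \<and> u + 1 = 4*x" by blast
  then show ?thesis
  proof cases
    case a
    show ?thesis
    proof (cases "r + 1 < x")
      case True
      have "q'*x + r' = q*x + (r+1)" using a u v by simp
      from qr_eq[OF this r(2) True] have "q' = q \<and> r' = r + 1" .
      then show ?thesis unfolding REL_def by simp
    next
      case False
      then have rx: "r + 1 = x" using r by simp
      have "q'*x + r' = (q+1)*x + 0" using a u v rx by (simp add: algebra_simps)
      from qr_eq[OF this r(2)] have "q' = q + 1 \<and> r' = 0" using x3 by simp
      then show ?thesis unfolding REL_def using rx by simp
    qed
  next
    case b
    show ?thesis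
    proof (cases "r' + 1 < x")
      case True
      have "q*x + r = q'*x + (r'+1)" using b u v by simp
      from qr_eq[OF this r(1) True] have "q = q' \<and> r = r' + 1" .
      then show ?thesis unfolding REL_def by simp
    next
      case False
      then have rx: "r' + 1 = x" using r by simp
      have "q*x + r = (q'+1)*x + 0" using b u v rx by (simp add: algebra_simps)
      from qr_eq[OF this r(1)] have "q = q' + 1 \<and> r = 0" using x3 by simp
      then show ?thesis unfolding REL_def using rx by simp
    qed
  next
    case c
    have "q'*x + r' = (q+1)*x + r" using c u v by (simp add: algebra_simps)
    from qr_eq[OF this r(2) r(1)] have "q' = q+1 \<and> r' = r" .
    then show ?thesis unfolding REL_def by simp
  next
    case d
    have "q*x + r = (q'+1)*x + r'" using d u v by (simp add: algebra_simps)
    from qr_eq[OF this r(1) r(2)] have "q = q'+1 \<and> r = r'" .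
    then show ?thesis unfolding REL_def by simp
  next
    case e
    have "q'*x + r' = (q+2)*x + r" using e u v by (simp add: algebra_simps)
    from qr_eq[OF this r(2) r(1)] have "q' = q+2 \<and> r' = r" .
    then show ?thesis unfolding REL_def by simp
  next
    case f
    have "q*x + r = (q'+2)*x + r'" using f u v by (simp add: algebra_simps)
    from qr_eq[OF this r(1) r(2)] have "q = q'+2 \<and> r = r'" .
    then show ?thesis unfolding REL_def by simp
  next
    case g
    have "q'*x + r' = (q+3)*x + r" using g u v by (simp add: algebra_simps)
    from qr_eq[OF this r(2) r(1)] have "q' = q+3 \<and> r' = r" .
    then show ?thesis unfolding REL_def by simp
  next
    case h
    have "q*x + r = (q'+3)*x + r'" using h u v by (simp add: algebra_simps)
    from qr_eq[OF this r(1) r(2)] have "q = q'+3 \<and> r = r'" .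
    then show ?thesis unfolding REL_def by simp
  next
    case i
    have "q*x + r = 0" using i u by linarith
    then have "r = 0" "q*x = 0" by simp_all
    then have q0: "q = 0 \<and> r = 0" using x3 by simp
    have xm: "x - 1 + 1 = x" using x3 by simp
    have "q'*x + r' = 3*x + (x - 1)" using i v xm by linarith
    moreover have "x - 1 < x" using x3 by simp
    ultimately have "q' = 3 \<and> r' = x - 1" using qr_eq[of q' x r' 3 "x-1"] r by blast
    then show ?thesis unfolding REL_def using q0 x3 by auto
  next
    case j
    have "q'*x + r' = 0" using j v by linarith
    then have "r' = 0" "q'*x = 0" by simp_all
    then have q0: "q' = 0 \<and> r' = 0" using x3 by simp
    have xm: "x - 1 + 1 = x" using x3 by simp
    have "q*x + r = 3*x + (x - 1)" using j u xm by linarith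
    moreover have "x - 1 < x" using x3 by simp
    ultimately have "q = 3 \<and> r = x - 1" using qr_eq[of q x r 3 "x-1"] r by blast
    then show ?thesis unfolding REL_def using q0 x3 by auto
  qed
qed

definition colB :: "nat \<Rightarrow> nat \<Rightarrow> nat" where "colB x i = cB (i div x) (i mod x)"

lemma decomp:
  fixes x u :: nat
  assumes "3 \<le> x" "u < 4*x"
  shows "u = (u div x)*x + u mod x" "u mod x < x" "u div x < 4"
  using assms by (auto intro: less_mult_imp_div_less)

lemma properB:
  fixes x u v :: nat
  assumes "3 \<le> x" "u < 4*x" "v < 4*x" "circ_adj (4*x) {1, x, 2*x} u v"
  shows "colB x u \<noteq> colB x v"
proof -
  note du = decomp[OF assms(1,2)] and dv = decomp[OF assms(1,3)]
  have "REL (u div x) (u mod x) (v div x) (v mod x) x"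
    by (rule relB[OF assms(1) du(1) dv(1) du(2) dv(2) assms(2,3,4)])
  from core_prop[OF du(3) dv(3) du(2) dv(2) assms(1) this] show ?thesis
    unfolding colB_def by simp
qed

lemma stepB:
  fixes x u v :: nat
  assumes "3 \<le> x" "u < 4*x" "v < 4*x" "circ_adj (4*x) {1, x, 2*x} u v"
    "colB x v = (colB x u + 1) mod 4"
  shows "PrB (u mod x) \<le> PrB (v mod x) \<and> (PrB (v mod x) = PrB (u mod x) \<longrightarrow>
     v mod x = u mod x \<and> v div x = (u div x + 3) mod 4)"
proof -
  note du = decomp[OF assms(1,2)] and dv = decomp[OF assms(1,3)]
  have "REL (u div x) (u mod x) (v div x) (v mod x) x"
    by (rule relB[OF assms(1) du(1) dv(1) du(2) dv(2) assms(2,3,4)])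
  from core_step[OF du(3) dv(3) du(2) dv(2) assms(1) this] show ?thesis
    using assms(5) unfolding colB_def by simp
qed

lemma circ_adj_sym: "circ_adj m R i j = circ_adj m R j i"
  unfolding circ_adj_def Let_def by (cases "i \<le> j") (auto)

lemma adj2:
  fixes x q r q2 :: nat
  assumes "r < x" "q < 4" "q2 = (q + 2) mod 4"
  shows "circ_adj (4*x) {1, x, 2*x} (q*x + r) (q2*x + r)"
  using q4[OF assms(2)] assms(1,3) unfolding circ_adj_def Let_def
  by (elim disjE) (simp_all add: algebra_simps)

lemma rcB:
  fixes x a b c d :: nat
  assumes x3: "3 \<le> x" and lt: "a < 4*x" "b < 4*x" "c < 4*x" "d < 4*x"
    and col: "colB x a = 0" "colB x b = 1" "colB x c = 2" "colB x d = 3"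
    and e: "circ_adj (4*x) {1, x, 2*x} a b" "circ_adj (4*x) {1, x, 2*x} b c"
      "circ_adj (4*x) {1, x, 2*x} c d" "circ_adj (4*x) {1, x, 2*x} a d"
  shows "circ_adj (4*x) {1, x, 2*x} a c \<and> circ_adj (4*x) {1, x, 2*x} b d"
proof -
  have ed: "circ_adj (4*x) {1, x, 2*x} d a" using e(4) circ_adj_sym by metis
  have s1: "PrB (a mod x) \<le> PrB (b mod x) \<and> (PrB (b mod x) = PrB (a mod x) \<longrightarrow>
     b mod x = a mod x \<and> b div x = (a div x + 3) mod 4)"
    by (rule stepB[OF x3 lt(1) lt(2) e(1)]) (use col in simp)
  have s2: "PrB (b mod x) \<le> PrB (c mod x) \<and> (PrB (c mod x) = PrB (b mod x) \<longrightarrow>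
     c mod x = b mod x \<and> c div x = (b div x + 3) mod 4)"
    by (rule stepB[OF x3 lt(2) lt(3) e(2)]) (use col in simp)
  have s3: "PrB (c mod x) \<le> PrB (d mod x) \<and> (PrB (d mod x) = PrB (c mod x) \<longrightarrow>
     d mod x = c mod x \<and> d div x = (c div x + 3) mod 4)"
    by (rule stepB[OF x3 lt(3) lt(4) e(3)]) (use col in simp)
  have s4: "PrB (d mod x) \<le> PrB (a mod x)"
    using stepB[OF x3 lt(4) lt(1) ed] col by simp
  have eqs: "PrB (b mod x) = PrB (a mod x)" "PrB (c mod x) = PrB (b mod x)" "PrB (d mod x) = PrB (c mod x)"
    using s1 s2 s3 s4 by linarith+
  have rb: "b mod x = a mod x" "b div x = (a div x + 3) mod 4" using s1 eqs(1) by auto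
  have rc: "c mod x = b mod x" "c div x = (b div x + 3) mod 4" using s2 eqs(2) by auto
  have rd: "d mod x = c mod x" "d div x = (c div x + 3) mod 4" using s3 eqs(3) by auto
  note da = decomp[OF x3 lt(1)] and db = decomp[OF x3 lt(2)]
    and dc = decomp[OF x3 lt(3)] and dd = decomp[OF x3 lt(4)]
  have m4: "\<And>p::nat. ((p + 3) mod 4 + 3) mod 4 = (p + 2) mod 4" by presburger
  have qc: "c div x = (a div x + 2) mod 4" using rc(2) rb(2) m4 by simp
  have qd: "d div x = (b div x + 2) mod 4" using rd(2) rc(2) m4 by simp
  have "circ_adj (4*x) {1, x, 2*x} ((a div x)*x + a mod x) ((c div x)*x + a mod x)"
    by (rule adj2[OF da(2) da(3) qc])
  moreover have "c = (c div x)*x + a mod x" using dc(1) rc(1) rb(1) by simp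
  ultimately have ac: "circ_adj (4*x) {1, x, 2*x} a c" using da(1) by simp
  have "circ_adj (4*x) {1, x, 2*x} ((b div x)*x + b mod x) ((d div x)*x + b mod x)"
    by (rule adj2[OF db(2) db(3) qd])
  moreover have "d = (d div x)*x + b mod x" using dd(1) rd(1) rc(1) by simp
  ultimately have bd: "circ_adj (4*x) {1, x, 2*x} b d" using db(1) by simp
  show ?thesis using ac bd by simp
qed


definition fC :: "nat \<Rightarrow> nat \<Rightarrow> nat \<Rightarrow> nat" where
  "fC k M i = (i + (k*i) div M) mod 3"

lemma fC_shift:
  assumes "0 < M" "M mod 3 = 0" "k mod 3 = 0"
  shows "fC k M (i + M) = fC k M i"
proof -
  have "(k*(i+M)) div M = (k*i + k*M) div M" by (simp add: algebra_simps)
  also have "\<dots> = k*i div M + k" using assms(1) by simp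
  finally have e: "(k*(i+M)) div M = k*i div M + k" .
  have h: "\<And>t. (i + M + (t + k)) mod 3 = (i + t) mod 3" using assms(2,3) by presburger
  show ?thesis unfolding fC_def e using h by simp
qed

lemma carry_le:
  fixes A B M :: nat
  assumes "0 < M"
  shows "(A mod M + B mod M) div M \<le> 1"
proof -
  have "A mod M < M" "B mod M < M" using assms by simp_all
  then have "A mod M + B mod M < 2 * M" by linarith
  then have "(A mod M + B mod M) div M < 2" by (simp add: less_mult_imp_div_less)
  then show ?thesis by simp
qed

lemma fC_step:
  fixes k n x d i :: nat
  assumes M: "M = 2*n" and n0: "0 < n" and k6: "k mod 6 = 3" and kM: "k \<le> M"
    and kx1: "M \<le> (k*x) mod (3*M)" and kx2: "(k*x) mod (3*M) \<le> 2*M"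
    and x3: "x mod 3 = 0" and n3: "n mod 3 = 0" and d: "d \<in> {1, x, n}"
  shows "fC k M (i + d) \<noteq> fC k M i"
proof -
  have M0: "0 < M" using M n0 by simp
  define A where "A = k*i"
  define B where "B = k*d"
  define c where "c = (A mod M + B mod M) div M"
  have kid: "k*(i+d) = A + B" by (simp add: A_def B_def algebra_simps)
  have sp: "(A + B) div M = A div M + B div M + c" unfolding c_def by (rule div_add1_eq)
  have c1: "c \<le> 1" unfolding c_def using carry_le[OF M0] .
  have c0: "B mod M = 0 \<Longrightarrow> c = 0" unfolding c_def using M0 by simp
  have key: "(d + B div M + c) mod 3 \<noteq> 0"
  proof -
    consider "d = 1" | "d = x" | "d = n" using d by auto
    then show ?thesis
    proof cases
      case 1
      then have B: "B = k" by (simp add: B_def)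
      show ?thesis
      proof (cases "k < M")
        case True
        then have "B div M = 0" using B by simp
        then show ?thesis using 1 c1 by presburger
      next
        case False
        then have "k = M" using kM by simp
        then have "B div M = 1" "B mod M = 0" using B M0 by auto
        moreover have "c = 0" using c0 \<open>B mod M = 0\<close> by simp
        ultimately show ?thesis using 1 by simp
      qed
    next
      case 2
      then have B: "B = k*x" by (simp add: B_def)
      have mm: "B mod (M*3) = M * (B div M mod 3) + B mod M" by (rule mod_mult2_eq)
      have r: "B mod M < M" using M0 by simp
      have q3: "B div M mod 3 < 3" by simp
      have lo: "M \<le> M * (B div M mod 3) + B mod M" and hi: "M * (B div M mod 3) + B mod M \<le> 2*M"
        using kx1 kx2 mm B by (simp_all add: mult.commute)
      have "B div M mod 3 = 1 \<or> (B div M mod 3 = 2 \<and> B mod M = 0)"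
      proof -
        consider "B div M mod 3 = 0" | "B div M mod 3 = 1" | "B div M mod 3 = 2" using q3 by linarith
        then show ?thesis
        proof cases
          case 1 then show ?thesis using lo r by simp
        next
          case 2 then show ?thesis by simp
        next
          case 3 then show ?thesis using hi by simp
        qed
      qed
      then have "B div M mod 3 = 1 \<or> (B div M mod 3 = 2 \<and> c = 0)" using c0 by auto
      moreover have "\<And>q cc. (q mod 3 = 1 \<or> (q mod 3 = 2 \<and> cc = 0)) \<Longrightarrow> cc \<le> 1 \<Longrightarrow> (x + q + cc) mod 3 \<noteq> 0"
        using x3 by presburger
      ultimately show ?thesis using 2 c1 by blast
    next
      case 3
      define t where "t = k div 6"
      have kt: "k = 6*t + 3" using k6 unfolding t_def by presburger
      have Bf: "B = n + (3*t+1)*M" unfolding B_def 3 kt M by (simp add: algebra_simps)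
      have nM: "n < M" using M n0 by simp
      have "B div M = (3*t+1) + n div M" unfolding Bf by (rule div_mult_self1) (use M0 in simp)
      then have "B div M = 3*t+1" using nM by simp
      moreover have "\<And>cc. cc \<le> 1 \<Longrightarrow> (n + (3*t+1) + cc) mod 3 \<noteq> 0"
        using n3 by presburger
      ultimately show ?thesis using 3 c1 by simp
    qed
  qed
  have h: "\<And>s u::nat. (s + u) mod 3 = s mod 3 \<Longrightarrow> u mod 3 = 0" by presburger
  show ?thesis
  proof
    assume eq: "fC k M (i + d) = fC k M i"
    have "fC k M (i + d) = ((i + A div M) + (d + B div M + c)) mod 3"
      unfolding fC_def kid sp by (simp add: algebra_simps)
    moreover have "fC k M i = (i + A div M) mod 3" unfolding fC_def A_def by simp
    ultimately have "(d + B div M + c) mod 3 = 0" using eq h by metis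
    then show False using key by simp
  qed
qed

lemma properC_le:
  fixes k n x :: nat
  assumes M: "M = 2*n" and n0: "0 < n" and k6: "k mod 6 = 3" and kM: "k \<le> M"
    and kx1: "M \<le> (k*x) mod (3*M)" and kx2: "(k*x) mod (3*M) \<le> 2*M"
    and x3: "x mod 3 = 0" and n3: "n mod 3 = 0"
    and ij: "i \<le> j" "j < M" and adj: "circ_adj M {1, x, n} i j"
  shows "fC k M i \<noteq> fC k M j"
proof -
  note st = fC_step[OF M n0 k6 kM kx1 kx2 x3 n3]
  define d where "d = j - i"
  have a: "min d (M - d) \<in> {1, x, n}" using adj ij unfolding circ_adj_def Let_def d_def by simp
  show ?thesis
  proof (cases "d \<le> M - d")
    case True
    then have "d \<in> {1,x,n}" using a by (simp add: min_def)
    then show ?thesis using st[of d i] ij d_def by simp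
  next
    case False
    then have e: "M - d \<in> {1,x,n}" using a by (simp add: min_def)
    have "i + M = j + (M - d)" using ij d_def by simp
    moreover have "M mod 3 = 0" "k mod 3 = 0" using M n3 k6 by presburger+
    then have "fC k M (i + M) = fC k M i" using fC_shift[of M k i] M n0 by simp
    ultimately have "fC k M i = fC k M (j + (M - d))" by simp
    then show ?thesis using st[OF e, of j] by simp
  qed
qed

lemma k_exists:
  fixes n x :: nat
  assumes n3: "n mod 3 = 0" and x3: "x mod 3 = 0" and nx: "n < 2*x" and xn: "x < n"
  shows "\<exists>k. k mod 6 = 3 \<and> k \<le> 2*n \<and> 2*n \<le> (k*x) mod (3*(2*n)) \<and> (k*x) mod (3*(2*n)) \<le> 2*(2*n)"
proof (cases "2*n \<le> 3*x")
  case True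
  have "3*x < 3*(2*n)" using xn by simp
  then have "(3*x) mod (3*(2*n)) = 3*x" by simp
  moreover have "3 \<le> 2*n" using nx xn x3 by presburger
  ultimately show ?thesis using True xn by (intro exI[of _ 3]) simp
next
  case False
  define e where "e = 4*x - 2*n"
  have e6: "6 \<le> e" using nx n3 x3 unfolding e_def by presburger
  define P where "P j \<longleftrightarrow> 2*n \<le> 3*x + 3*(j*e)" for j
  have "P (2*n)" unfolding P_def using e6 by (simp add: trans_le_add2)
  then obtain j where j: "j \<le> 2*n" "\<forall>i<j. \<not> P i" "P j" using ex_least_nat_le by blast
  have j0: "0 < j" using j(3) False unfolding P_def by (cases j) auto
  then obtain j' where jj: "j = Suc j'" by (cases j) auto
  have nP: "\<not> P j'" using j(2) jj by simp
  define J where "J = j' * e"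
  have J6: "6 * j' \<le> J" unfolding J_def using e6 by simp
  have je: "j * e = J + e" unfolding J_def jj by simp
  have lo: "2*n \<le> 3*x + 3*(J + e)" using j(3) je unfolding P_def by simp
  have hiJ: "3*x + 3*J < 2*n" using nP unfolding P_def J_def by simp
  have e2: "e + 2*n = 4*x" unfolding e_def using nx by simp
  have lt: "3*x < 2*n" using False by simp
  define v where "v = 3*x + 3*J + 3*e"
  have kx: "(12*j+3)*x = v + (3*(2*n))*j"
  proof -
    have "(12*j+3)*x = 3*x + 3*j*(4*x)" by (simp add: algebra_simps)
    also have "4*x = e + 2*n" using e2 by simp
    finally have "(12*j+3)*x = 3*x + 3*j*(e + 2*n)" .
    also have "\<dots> = 3*x + 3*(j*e) + (3*(2*n))*j" by (simp add: algebra_simps)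
    finally show ?thesis unfolding v_def je by (simp add: algebra_simps)
  qed
  have v1: "v < 6*n" unfolding v_def using hiJ lt e2 by linarith
  then have vlt: "v < 3*(2*n)" by simp
  have "((12*j+3)*x) mod (3*(2*n)) = v" unfolding kx using vlt by simp
  moreover have "v \<le> 4*n" unfolding v_def using hiJ lt e2 by linarith
  moreover have "2*n \<le> v" unfolding v_def using lo by simp
  moreover have "12*j + 3 \<le> 2*n"
  proof -
    have n9: "9 \<le> n" using lt nx n3 x3 by presburger
    have "36 * j' < n" using J6 hiJ nx by linarith
    then show ?thesis using n9 jj by linarith
  qed
  moreover have "(12*j+3) mod 6 = 3" by presburger
  ultimately show ?thesis by (intro exI[of _ "12*j+3"]) simp
qed


lemma wr_general:
  fixes V :: "nat set" and E :: "nat \<Rightarrow> nat \<Rightarrow> bool" and col :: "nat \<Rightarrow> nat"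
  assumes fin: "finite V" and esym: "\<And>u v. E u v \<Longrightarrow> E v u"
  and prp: "\<And>u v. u \<in> V \<Longrightarrow> v \<in> V \<Longrightarrow> E u v \<Longrightarrow> col u \<noteq> col v"
  and rng: "\<And>u. u \<in> V \<Longrightarrow> col u < 4"
  and rc: "\<And>a b c d. a \<in> V \<Longrightarrow> b \<in> V \<Longrightarrow> c \<in> V \<Longrightarrow> d \<in> V \<Longrightarrow>
      col a = 0 \<Longrightarrow> col b = 1 \<Longrightarrow> col c = 2 \<Longrightarrow> col d = 3 \<Longrightarrow>
      E a b \<Longrightarrow> E b c \<Longrightarrow> E c d \<Longrightarrow> E a d \<Longrightarrow> E a c \<and> E b d"
  shows "word_representable V E"
proof -
  define S where "S = sorted_list_of_set V"
  define f where "f k = filter (\<lambda>v. col v = k) S" for k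
  define L where "L = f 0 @ f 1 @ f 2 @ f 3"
  have dS: "distinct S" "set S = V" using fin by (auto simp: S_def)
  have sf: "set (f k) = {v \<in> V. col v = k}" for k using dS by (auto simp: f_def)
  have df: "distinct (f k)" for k using dS by (simp add: f_def)
  have dist: "distinct L" unfolding L_def using df sf by auto
  have setL: "set L = V"
  proof
    show "set L \<subseteq> V" unfolding L_def using sf by auto
    show "V \<subseteq> set L"
    proof
      fix v assume v: "v \<in> V"
      then have "col v = 0 \<or> col v = 1 \<or> col v = 2 \<or> col v = 3" using rng[OF v] by linarith
      then show "v \<in> set L" unfolding L_def using sf v by auto
    qed
  qed
  have ord: "\<exists>l1 l2. L = l1 @ l2 \<and> u \<in> set l1 \<and> v \<in> set l2"
    if uv: "u \<in> V" "v \<in> V" "col u < col v" for u v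
  proof -
    have cv: "col v < 4" using rng uv(2) by simp
    consider "col u = 0" | "col u = 1" | "col u = 2" using uv(3) cv by linarith
    then show ?thesis
    proof cases
      case 1
      then show ?thesis using sf uv cv unfolding L_def
        by (intro exI[of _ "f 0"] exI[of _ "f 1 @ f 2 @ f 3"]) auto
    next
      case 2
      then have "col v = 2 \<or> col v = 3" using uv(3) cv by linarith
      then show ?thesis using sf uv 2 unfolding L_def
        by (intro exI[of _ "f 0 @ f 1"] exI[of _ "f 2 @ f 3"]) auto
    next
      case 3
      then have "col v = 3" using uv(3) cv by linarith
      then show ?thesis using sf uv 3 unfolding L_def
        by (intro exI[of _ "f 0 @ f 1 @ f 2"] exI[of _ "f 3"]) auto
    qed
  qed
  interpret lay V E col L
    by (unfold_locales) (use dist setL esym prp rng rc ord in auto)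
  show ?thesis by (rule wr)
qed

theorem corollary3:
  fixes n x :: nat
  assumes "1 < x" and "x < n"
    and "n mod 3 = 0" and "x mod 3 = 0"
    and "n \<le> 2 * x" and "x \<le> n"
  shows "word_representable (circ_vertices (2 * n)) (circ_adj (2 * n) {1, x, n})"
proof -
  have x3: "3 \<le> x" using assms(1,4) by presburger
  have symE: "\<And>u v. circ_adj (2*n) {1, x, n} u v \<Longrightarrow> circ_adj (2*n) {1, x, n} v u"
    using circ_adj_sym by metis
  consider (eq) "n = 2*x" | (lt) "n < 2*x" using assms(5) by linarith
  then show ?thesis
  proof cases
    case eq
    have EE: "circ_adj (2*n) {1, x, n} = circ_adj (4*x) {1, x, 2*x}" using eq by simp
    have VV: "circ_vertices (2*n) = {0..<4*x}" using eq by (simp add: circ_vertices_def)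
    show ?thesis unfolding EE VV
    proof (rule wr_general[where col = "colB x"])
      show "finite {0..<4*x}" by simp
      show "\<And>u v. circ_adj (4*x) {1, x, 2*x} u v \<Longrightarrow> circ_adj (4*x) {1, x, 2*x} v u"
        using circ_adj_sym by metis
      show "\<And>u v. u \<in> {0..<4*x} \<Longrightarrow> v \<in> {0..<4*x} \<Longrightarrow> circ_adj (4*x) {1, x, 2*x} u v
          \<Longrightarrow> colB x u \<noteq> colB x v"
        using properB x3 by simp
      show "\<And>u. u \<in> {0..<4*x} \<Longrightarrow> colB x u < 4"
        by (simp add: colB_def cB_def)
      show "\<And>a b c d. a \<in> {0..<4*x} \<Longrightarrow> b \<in> {0..<4*x} \<Longrightarrow> c \<in> {0..<4*x} \<Longrightarrow> d \<in> {0..<4*x} \<Longrightarrow>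
          colB x a = 0 \<Longrightarrow> colB x b = 1 \<Longrightarrow> colB x c = 2 \<Longrightarrow> colB x d = 3 \<Longrightarrow>
          circ_adj (4*x) {1, x, 2*x} a b \<Longrightarrow> circ_adj (4*x) {1, x, 2*x} b c \<Longrightarrow>
          circ_adj (4*x) {1, x, 2*x} c d \<Longrightarrow> circ_adj (4*x) {1, x, 2*x} a d \<Longrightarrow>
          circ_adj (4*x) {1, x, 2*x} a c \<and> circ_adj (4*x) {1, x, 2*x} b d"
        using rcB x3 by simp
    qed
  next
    case lt
    obtain k where k: "k mod 6 = 3" "k \<le> 2*n" "2*n \<le> (k*x) mod (3*(2*n))" "(k*x) mod (3*(2*n)) \<le> 2*(2*n)"
      using k_exists[OF assms(3,4) lt assms(2)] by blast
    have n0: "0 < n" using assms(2) by simp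
    have VV: "circ_vertices (2*n) = {0..<2*n}" by (simp add: circ_vertices_def)
    have pr: "fC k (2*n) u \<noteq> fC k (2*n) v"
      if "u < 2*n" "v < 2*n" "circ_adj (2*n) {1, x, n} u v" for u v
    proof (cases "u \<le> v")
      case True
      show ?thesis by (rule properC_le[OF refl n0 k(1) k(2) k(3) k(4) assms(4) assms(3) True that(2) that(3)])
    next
      case False
      have "circ_adj (2*n) {1, x, n} v u" using that(3) symE by blast
      moreover have "v \<le> u" using False by simp
      ultimately have "fC k (2*n) v \<noteq> fC k (2*n) u"
        using properC_le[OF refl n0 k(1) k(2) k(3) k(4) assms(4) assms(3) _ that(1)] by blast
      then show ?thesis by simp
    qed
    have f3: "\<And>d. fC k (2*n) d < 3" by (simp add: fC_def)
    show ?thesis unfolding VV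
    proof (rule wr_general[where col = "fC k (2*n)"])
      show "finite {0..<2*n}" by simp
      show "\<And>u v. circ_adj (2*n) {1, x, n} u v \<Longrightarrow> circ_adj (2*n) {1, x, n} v u" by (rule symE)
      show "\<And>u v. u \<in> {0..<2*n} \<Longrightarrow> v \<in> {0..<2*n} \<Longrightarrow> circ_adj (2*n) {1, x, n} u v
          \<Longrightarrow> fC k (2*n) u \<noteq> fC k (2*n) v"
        using pr by simp
      show "\<And>u. u \<in> {0..<2*n} \<Longrightarrow> fC k (2*n) u < 4"
        by (simp add: fC_def)
      show "\<And>a b c d. a \<in> {0..<2*n} \<Longrightarrow> b \<in> {0..<2*n} \<Longrightarrow> c \<in> {0..<2*n} \<Longrightarrow> d \<in> {0..<2*n} \<Longrightarrow>
          fC k (2*n) a = 0 \<Longrightarrow> fC k (2*n) b = 1 \<Longrightarrow> fC k (2*n) c = 2 \<Longrightarrow> fC k (2*n) d = 3 \<Longrightarrow>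
          circ_adj (2*n) {1, x, n} a b \<Longrightarrow> circ_adj (2*n) {1, x, n} b c \<Longrightarrow>
          circ_adj (2*n) {1, x, n} c d \<Longrightarrow> circ_adj (2*n) {1, x, n} a d \<Longrightarrow>
          circ_adj (2*n) {1, x, n} a c \<and> circ_adj (2*n) {1, x, n} b d"
        using f3 by (metis less_irrefl)
    qed
  qed
qed

end
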